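(* Fix a prime $p$ and an integer $h\ge 1$, and work in the category $\mathcal{C}_{p^h}$ (defined in the context). Let $\iota_R\colon (A,I_A,\psi_A)\to (R,I_R,\psi_R)$ and $\iota_S\colon (A,I_A,\psi_A)\to (S,I_S,\psi_S)$ be morphisms in $\mathcal{C}_{p^h}$. Suppose that $I_R=\iota_R(I_A)R$ and that $(S,I_S,\psi_S)$ is complete and perfect. Let $\mu\colon R\to S$ be a ring homomorphism with $\mu\iota_R=\iota_S$. Then there exists a unique morphism $\widehat\mu\colon (R,I_R,\psi_R)\to (S,I_S,\psi_S)$ in $\mathcal{C}_{p^h}$ such that $\widehat\mu\iota_R=\iota_S$ and $\widehat\mu(x)\equiv \mu(x) \bmod I_S$ for all $x\in R$.
   Context: $\mathcal{C}_{p^h}$ is the category whose objects are triples $(R,I_R,\psi_R)$ with $R$ a commutative ring, $I_R\subseteq R$ an ideal with $p\in I_R$, and $\psi_R\colon R\to R$ a ring endomorphism such that $\psi_R(x)\equiv x^{p^h}\bmod I_R$ for all $x\in R$. A morphism $(R,I_R,\psi_R)\to(S,I_S,\psi_S)$ is a ring homomorphism $\mu\colon R\to S$ with $\mu(I_R)\subseteq I_S$ and $\mu\psi_R=\psi_S\mu$. An object is complete if $R\to\lim_k R/I_R^k$ is an isomorphism, and perfect if $\psi_R$ is an isomorphism with $\psi_R(I_R)=I_R$. *)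

theory Defs
  imports Main "HOL-Computational_Algebra.Primes"
begin

definition is_ideal :: "'a::comm_ring_1 set \<Rightarrow> bool" where
  "is_ideal I \<longleftrightarrow> 0 \<in> I \<and> (\<forall>x\<in>I. \<forall>y\<in>I. x + y \<in> I) \<and> (\<forall>r. \<forall>x\<in>I. r * x \<in> I)"

definition ideal_span :: "'a::comm_ring_1 set \<Rightarrow> 'a set" where
  "ideal_span X = \<Inter>{J. is_ideal J \<and> X \<subseteq> J}"

fun ideal_pow :: "'a::comm_ring_1 set \<Rightarrow> nat \<Rightarrow> 'a set" where
  "ideal_pow I 0 = UNIV"
| "ideal_pow I (Suc k) = ideal_span {a * b | a b. a \<in> I \<and> b \<in> ideal_pow I k}"

definition is_ring_hom :: "('a::comm_ring_1 \<Rightarrow> 'b::comm_ring_1) \<Rightarrow> bool" where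
  "is_ring_hom f \<longleftrightarrow> f 1 = 1 \<and> (\<forall>x y. f (x + y) = f x + f y) \<and> (\<forall>x y. f (x * y) = f x * f y)"

definition is_obj :: "nat \<Rightarrow> nat \<Rightarrow> 'a::comm_ring_1 set \<Rightarrow> ('a \<Rightarrow> 'a) \<Rightarrow> bool" where
  "is_obj p h I \<psi> \<longleftrightarrow> is_ideal I \<and> of_nat p \<in> I \<and> is_ring_hom \<psi> \<and>
     (\<forall>x. \<psi> x - x ^ (p ^ h) \<in> I)"

definition is_mor :: "'a::comm_ring_1 set \<Rightarrow> ('a \<Rightarrow> 'a) \<Rightarrow> 'b::comm_ring_1 set \<Rightarrow> ('b \<Rightarrow> 'b)
    \<Rightarrow> ('a \<Rightarrow> 'b) \<Rightarrow> bool" where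
  "is_mor I \<psi> J \<phi> \<mu> \<longleftrightarrow> is_ring_hom \<mu> \<and> \<mu> ` I \<subseteq> J \<and> \<mu> \<circ> \<psi> = \<phi> \<circ> \<mu>"

(* R \<rightarrow> lim_k R/I^k is an isomorphism: injective and surjective, where an
   element of the inverse limit is represented by a compatible family of lifts
   x k \<in> R of classes in R/I^k, compatibility meaning x (k+1) \<equiv> x k mod I^k *)
definition is_complete :: "'a::comm_ring_1 set \<Rightarrow> bool" where
  "is_complete I \<longleftrightarrow> (\<Inter>k. ideal_pow I k) = {0} \<and>
     (\<forall>x :: nat \<Rightarrow> 'a. (\<forall>k. x (Suc k) - x k \<in> ideal_pow I k) \<longrightarrow>
        (\<exists>y. \<forall>k. y - x k \<in> ideal_pow I k))"

definition is_perfect :: "'a::comm_ring_1 set \<Rightarrow> ('a \<Rightarrow> 'a) \<Rightarrow> bool" where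
  "is_perfect I \<psi> \<longleftrightarrow> bij \<psi> \<and> \<psi> ` I = I"

end

theory Submission
  imports Defs
begin


lemma ideal_zero: "is_ideal I \<Longrightarrow> 0 \<in> I" by (simp add: is_ideal_def)
lemma ideal_add: "is_ideal I \<Longrightarrow> x \<in> I \<Longrightarrow> y \<in> I \<Longrightarrow> x + y \<in> I" by (simp add: is_ideal_def)
lemma ideal_mult_left: "is_ideal I \<Longrightarrow> x \<in> I \<Longrightarrow> r * x \<in> I" by (simp add: is_ideal_def)
lemma ideal_mult_right: "is_ideal I \<Longrightarrow> x \<in> I \<Longrightarrow> x * r \<in> I"
  using ideal_mult_left[of I x r] by (simp add: mult.commute)
lemma ideal_neg: "is_ideal I \<Longrightarrow> x \<in> I \<Longrightarrow> - x \<in> I"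
  using ideal_mult_left[of I x "-1"] by simp
lemma ideal_diff: "is_ideal I \<Longrightarrow> x \<in> I \<Longrightarrow> y \<in> I \<Longrightarrow> x - y \<in> I"
  using ideal_add[of I x "-y"] ideal_neg[of I y] by simp
lemma ideal_sum: "is_ideal I \<Longrightarrow> (\<And>i. i \<in> A \<Longrightarrow> f i \<in> I) \<Longrightarrow> sum f A \<in> I"
  by (induct A rule: infinite_finite_induct) (auto simp: ideal_zero ideal_add)

lemma ideal_UNIV: "is_ideal UNIV" by (simp add: is_ideal_def)

lemma ideal_span_ideal: "is_ideal (ideal_span X)"
  unfolding ideal_span_def is_ideal_def by auto
lemma ideal_span_sub: "X \<subseteq> ideal_span X"
  unfolding ideal_span_def by auto
lemma ideal_span_least: "is_ideal J \<Longrightarrow> X \<subseteq> J \<Longrightarrow> ideal_span X \<subseteq> J"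
  unfolding ideal_span_def by auto
lemma ideal_span_mono: "X \<subseteq> Y \<Longrightarrow> ideal_span X \<subseteq> ideal_span Y"
  using ideal_span_least[OF ideal_span_ideal, of X Y] ideal_span_sub[of Y] by blast

lemma ideal_pow_ideal: "is_ideal (ideal_pow I k)"
  by (cases k) (auto simp: ideal_UNIV ideal_span_ideal)

lemma ideal_pow_mult: "a \<in> I \<Longrightarrow> b \<in> ideal_pow I k \<Longrightarrow> a * b \<in> ideal_pow I (Suc k)"
  using ideal_span_sub by fastforce

lemma ideal_pow_one: "is_ideal I \<Longrightarrow> ideal_pow I 1 = I"
proof
  assume I: "is_ideal I"
  show "ideal_pow I 1 \<subseteq> I"
  proof -
    have "{a * b |a b. a \<in> I \<and> b \<in> ideal_pow I 0} \<subseteq> I" using I by (auto simp: ideal_mult_right)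
    then show ?thesis using ideal_span_least[OF I] by simp
  qed
  show "I \<subseteq> ideal_pow I 1"
  proof
    fix x assume "x \<in> I"
    then have "x * 1 \<in> ideal_pow I (Suc 0)" by (rule ideal_pow_mult) simp
    then show "x \<in> ideal_pow I 1" by simp
  qed
qed

lemma ideal_pow_Suc_sub: "is_ideal I \<Longrightarrow> ideal_pow I (Suc k) \<subseteq> ideal_pow I k"
proof (induct k)
  case 0 then show ?case by simp
next
  case (Suc k)
  have "{a * b |a b. a \<in> I \<and> b \<in> ideal_pow I (Suc k)} \<subseteq> {a * b |a b. a \<in> I \<and> b \<in> ideal_pow I k}"
    using Suc by blast
  then show ?case by (simp only: ideal_pow.simps) (rule ideal_span_mono)
qed

lemma ideal_pow_antimono: "is_ideal I \<Longrightarrow> m \<le> n \<Longrightarrow> ideal_pow I n \<subseteq> ideal_pow I m"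
proof (induct n)
  case 0 then show ?case by simp
next
  case (Suc n)
  then show ?case
    by (metis ideal_pow_Suc_sub le_Suc_eq order.trans order.refl)
qed

lemma hom_zero: "is_ring_hom f \<Longrightarrow> f 0 = 0"
  unfolding is_ring_hom_def by (metis add.right_neutral add_left_cancel)
lemma hom_add: "is_ring_hom f \<Longrightarrow> f (x + y) = f x + f y"
  unfolding is_ring_hom_def by simp
lemma hom_mult: "is_ring_hom f \<Longrightarrow> f (x * y) = f x * f y"
  unfolding is_ring_hom_def by simp
lemma hom_one: "is_ring_hom f \<Longrightarrow> f 1 = 1"
  unfolding is_ring_hom_def by simp
lemma hom_neg: "is_ring_hom f \<Longrightarrow> f (- x) = - f x"
proof -
  assume f: "is_ring_hom f"
  have "f x + f (-x) = 0" using hom_add[OF f, of x "-x"] hom_zero[OF f] by simp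
  then have "- f x = f (-x)" by (simp only: neg_eq_iff_add_eq_0)
  then show ?thesis by simp
qed
lemma hom_diff: "is_ring_hom f \<Longrightarrow> f (x - y) = f x - f y"
  using hom_add[of f x "-y"] hom_neg[of f y] by simp
lemma hom_power: "is_ring_hom f \<Longrightarrow> f (x ^ n) = f x ^ n"
  by (induct n) (auto simp: hom_one hom_mult)

lemma hom_comp: "is_ring_hom f \<Longrightarrow> is_ring_hom g \<Longrightarrow> is_ring_hom (f \<circ> g)"
  unfolding is_ring_hom_def by simp

lemma hom_inv: assumes "is_ring_hom f" "bij f" shows "is_ring_hom (inv f)"
proof -
  have fi: "f (inv f y) = y" for y using assms(2) by (simp add: bij_is_surj surj_f_inv_f)
  have if_: "inv f (f y) = y" for y using assms(2) by (simp add: bij_is_inj)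
  show ?thesis unfolding is_ring_hom_def
    by (metis fi if_ hom_add[OF assms(1)] hom_mult[OF assms(1)] hom_one[OF assms(1)])
qed

lemma hom_image_span: assumes "is_ring_hom f" shows "f ` ideal_span X \<subseteq> ideal_span (f ` X)"
proof -
  let ?T = "{x. f x \<in> ideal_span (f ` X)}"
  have "is_ideal ?T" using ideal_span_ideal[of "f ` X"]
    unfolding is_ideal_def by (auto simp: hom_zero[OF assms] hom_add[OF assms] hom_mult[OF assms])
  moreover have "X \<subseteq> ?T" using ideal_span_sub by blast
  ultimately have "ideal_span X \<subseteq> ?T" by (rule ideal_span_least)
  then show ?thesis by blast
qed

lemma hom_image_pow: assumes "is_ring_hom f" "f ` I \<subseteq> J"
  shows "f ` ideal_pow I k \<subseteq> ideal_pow J k"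
proof (induct k)
  case 0 then show ?case by simp
next
  case (Suc k)
  have "f ` {a * b |a b. a \<in> I \<and> b \<in> ideal_pow I k} \<subseteq> {a * b |a b. a \<in> J \<and> b \<in> ideal_pow J k}"
  proof
    fix y assume "y \<in> f ` {a * b |a b. a \<in> I \<and> b \<in> ideal_pow I k}"
    then obtain a b where y: "y = f (a * b)" "a \<in> I" "b \<in> ideal_pow I k" by blast
    then have "y = f a * f b" "f a \<in> J" "f b \<in> ideal_pow J k" using Suc assms hom_mult[OF assms(1)] by auto
    then show "y \<in> {a * b |a b. a \<in> J \<and> b \<in> ideal_pow J k}" by blast
  qed
  then show ?case using hom_image_span[OF assms(1)]
    by (simp only: ideal_pow.simps) (meson ideal_span_mono order.trans)
qed

lemma pow_diff:
  assumes I: "is_ideal I" and q: "of_nat q \<in> I" and k: "k \<ge> 1"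
    and ab: "a - b \<in> ideal_pow I k"
  shows "a ^ q - b ^ q \<in> ideal_pow I (Suc k)"
proof -
  have abI: "a - b \<in> I" using ab ideal_pow_antimono[OF I k] ideal_pow_one[OF I] by auto
  have powI: "a ^ i - b ^ i \<in> I" for i
    using power_diff_sumr2[of a i b] abI ideal_mult_right[OF I] by metis
  define S where "S = (\<Sum>i<q. b^(q - Suc i) * a^i)"
  have "S - of_nat q * b^(q-1) = (\<Sum>i<q. b^(q - Suc i) * a^i - b^(q-1))"
    by (simp add: S_def sum_subtractf)
  also have "\<dots> = (\<Sum>i<q. b^(q - Suc i) * (a^i - b^i))"
  proof (rule sum.cong)
    fix i assume "i \<in> {..<q}"
    then have "b^(q - Suc i) * b^i = b^(q-1)" by (simp flip: power_add)
    then show "b^(q - Suc i) * a^i - b^(q-1) = b^(q - Suc i) * (a^i - b^i)"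
      by (simp add: algebra_simps)
  qed simp
  finally have "S - of_nat q * b^(q-1) \<in> I"
    using ideal_sum[OF I, of "{..<q}" "\<lambda>i. b ^ (q - Suc i) * (a ^ i - b ^ i)"] ideal_mult_left[OF I powI] by simp
  moreover have "of_nat q * b^(q-1) \<in> I" using ideal_mult_right[OF I q] .
  ultimately have SI: "S \<in> I" using ideal_add[OF I] by fastforce
  have "a ^ q - b ^ q = S * (a - b)" by (simp add: S_def power_diff_sumr2 mult.commute)
  then show ?thesis using ideal_pow_mult[OF SI ab] by simp
qed



lemma key_step:
  fixes IS :: "'s::comm_ring_1 set" and \<iota>R :: "'a \<Rightarrow> 'r::comm_ring_1"
    and F G :: "'r \<Rightarrow> 's" and q :: nat
  assumes IS: "is_ideal IS" and q: "of_nat q \<in> IS"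
    and F: "is_ring_hom F" and G: "is_ring_hom G"
    and FG: "\<forall>a\<in>IA. F (\<iota>R a) = G (\<iota>R a) \<and> G (\<iota>R a) \<in> IS"
    and IR: "IR = ideal_span (\<iota>R ` IA)"
    and r: "\<psi>R x - x ^ q \<in> IR"
    and k: "k \<ge> 1" and d: "\<forall>y. F y - G y \<in> ideal_pow IS k"
  shows "F (\<psi>R x) - G (\<psi>R x) \<in> ideal_pow IS (Suc k)"
proof -
  let ?T = "{r. F r - G r \<in> ideal_pow IS (Suc k) \<and> G r \<in> IS}"
  have PI: "is_ideal (ideal_pow IS (Suc k))" by (rule ideal_pow_ideal)
  have "is_ideal ?T"
    unfolding is_ideal_def
  proof (intro conjI ballI allI)
    show "0 \<in> ?T" using hom_zero[OF F] hom_zero[OF G] ideal_zero[OF PI] ideal_zero[OF IS] by simp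
  next
    fix x y assume x: "x \<in> ?T" and y: "y \<in> ?T"
    have s: "F (x+y) - G (x+y) = (F x - G x) + (F y - G y)" by (simp add: hom_add[OF F] hom_add[OF G])
    have "(F x - G x) + (F y - G y) \<in> ideal_pow IS (Suc k)" using x y ideal_add[OF PI] by blast
    then have 1: "F (x+y) - G (x+y) \<in> ideal_pow IS (Suc k)" by (simp only: s)
    have "G x + G y \<in> IS" using x y ideal_add[OF IS] by blast
    then have "G (x+y) \<in> IS" by (simp only: hom_add[OF G])
    then show "x + y \<in> ?T" using 1 by blast
  next
    fix s x assume x: "x \<in> ?T"
    have e: "F (s*x) - G (s*x) = F s * (F x - G x) + G x * (F s - G s)"
      by (simp add: hom_mult[OF F] hom_mult[OF G] algebra_simps)
    have "G x * (F s - G s) \<in> ideal_pow IS (Suc k)" using x d ideal_pow_mult by blast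
    moreover have "F s * (F x - G x) \<in> ideal_pow IS (Suc k)" using x ideal_mult_left[OF PI] by blast
    ultimately show "s * x \<in> ?T" using e ideal_add[OF PI] x ideal_mult_left[OF IS] hom_mult[OF G] by auto
  qed
  moreover have "\<iota>R ` IA \<subseteq> ?T" using FG ideal_zero[OF PI] by auto
  ultimately have IRT: "IR \<subseteq> ?T" using IR ideal_span_least by blast
  define r where "r = \<psi>R x - x ^ q"
  have "\<psi>R x = r + x^q" by (simp add: r_def)
  then have e: "F (\<psi>R x) - G (\<psi>R x) = (F r - G r) + ((F x)^q - (G x)^q)"
    by (simp add: hom_add[OF F] hom_add[OF G] hom_power[OF F] hom_power[OF G])
  have "F r - G r \<in> ideal_pow IS (Suc k)" using IRT r r_def by auto
  moreover have "(F x)^q - (G x)^q \<in> ideal_pow IS (Suc k)" using pow_diff[OF IS q k] d by blast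
  ultimately show ?thesis using e ideal_add[OF PI] by simp
qed

lemma complete_zero: "is_complete I \<Longrightarrow> (\<And>k. z \<in> ideal_pow I k) \<Longrightarrow> z = 0"
  unfolding is_complete_def by blast

lemma complete_eq: "is_complete I \<Longrightarrow> (\<And>k. a - b \<in> ideal_pow I k) \<Longrightarrow> a = b"
  using complete_zero[of I "a - b"] by simp

theorem proposition2p1:
  fixes p h :: nat
    and IA :: "'a::comm_ring_1 set" and \<psi>A :: "'a \<Rightarrow> 'a"
    and IR :: "'r::comm_ring_1 set" and \<psi>R :: "'r \<Rightarrow> 'r"
    and IS :: "'s::comm_ring_1 set" and \<psi>S :: "'s \<Rightarrow> 's"
    and \<iota>R :: "'a \<Rightarrow> 'r" and \<iota>S :: "'a \<Rightarrow> 's" and \<mu> :: "'r \<Rightarrow> 's"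
  assumes "prime p" and "h \<ge> 1"
    and "is_obj p h IA \<psi>A" and "is_obj p h IR \<psi>R" and "is_obj p h IS \<psi>S"
    and "is_mor IA \<psi>A IR \<psi>R \<iota>R" and "is_mor IA \<psi>A IS \<psi>S \<iota>S"
    and "IR = ideal_span (\<iota>R ` IA)"
    and "is_complete IS" and "is_perfect IS \<psi>S"
    and "is_ring_hom \<mu>" and "\<mu> \<circ> \<iota>R = \<iota>S"
  shows "\<exists>!\<mu>'. is_mor IR \<psi>R IS \<psi>S \<mu>' \<and> \<mu>' \<circ> \<iota>R = \<iota>S \<and> (\<forall>x. \<mu>' x - \<mu> x \<in> IS)"
proof -
  note h = assms(2) and IRdef = assms(8) and compl = assms(9) and muhom = assms(11) and muiota = assms(12)
  define q where "q = p ^ h"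
  have IRi: "is_ideal IR" and psiRh: "is_ring_hom \<psi>R" and psiR: "\<And>x. \<psi>R x - x ^ q \<in> IR"
    using assms(4) unfolding is_obj_def q_def by auto
  have ISi: "is_ideal IS" and pS: "of_nat p \<in> IS" and psiSh: "is_ring_hom \<psi>S"
    and psiS: "\<And>x. \<psi>S x - x ^ q \<in> IS"
    using assms(5) unfolding is_obj_def q_def by auto
  have qS: "of_nat q \<in> IS"
  proof -
    have "(of_nat q :: 's) = of_nat p * of_nat p ^ (h - 1)"
      using h by (simp add: q_def power_eq_if[of _ h])
    then show ?thesis using ideal_mult_right[OF ISi pS] by simp
  qed
  have iSh: "is_ring_hom \<iota>S" and iSI: "\<iota>S ` IA \<subseteq> IS" and iSpsi: "\<iota>S \<circ> \<psi>A = \<psi>S \<circ> \<iota>S"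
    using assms(7) unfolding is_mor_def by auto
  have iRpsi: "\<iota>R \<circ> \<psi>A = \<psi>R \<circ> \<iota>R"
    using assms(6) unfolding is_mor_def by auto
  have bij: "bij \<psi>S" and psiSI: "\<psi>S ` IS = IS" using assms(10) unfolding is_perfect_def by auto
  define \<phi> where "\<phi> = inv \<psi>S"
  have phih: "is_ring_hom \<phi>" unfolding \<phi>_def using hom_inv[OF psiSh bij] .
  have psiphi: "\<psi>S (\<phi> y) = y" for y unfolding \<phi>_def using bij by (simp add: bij_is_surj surj_f_inv_f)
  have phipsi: "\<phi> (\<psi>S y) = y" for y unfolding \<phi>_def using bij by (simp add: bij_is_inj)
  have phiI: "\<phi> ` IS \<subseteq> IS"
  proof (rule image_subsetI)
    fix y assume "y \<in> IS"
    then obtain z where "z \<in> IS" "y = \<psi>S z" using psiSI by (metis imageE)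
    then show "\<phi> y \<in> IS" using phipsi by simp
  qed
  have phiP: "\<phi> z \<in> ideal_pow IS k" if "z \<in> ideal_pow IS k" for z k
    using hom_image_pow[OF phih phiI, of k] that by blast
  have psiP: "\<psi>S z \<in> ideal_pow IS k" if "z \<in> ideal_pow IS k" for z k
    using hom_image_pow[OF psiSh, of IS IS k] psiSI that by blast
  have I1: "ideal_pow IS 1 = IS" by (rule ideal_pow_one[OF ISi])
  have PI: "is_ideal (ideal_pow IS k)" for k by (rule ideal_pow_ideal)
  have Pmono: "z \<in> ideal_pow IS m" if "z \<in> ideal_pow IS n" "m \<le> n" for z m n
    using ideal_pow_antimono[OF ISi that(2)] that(1) by blast
  have muIR: "\<mu> ` IR \<subseteq> IS"
  proof -
    have "\<mu> ` IR \<subseteq> ideal_span (\<mu> ` \<iota>R ` IA)" using IRdef hom_image_span[OF muhom] by blast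
    also have "\<mu> ` \<iota>R ` IA = \<iota>S ` IA" using muiota by (auto simp flip: image_comp)
    finally show ?thesis using ideal_span_least[OF ISi iSI] by blast
  qed
  have PS: "z \<in> ideal_pow IS k" if "z \<in> ideal_pow IS (Suc k)" for z k
    using Pmono[OF that] by simp
  have Pdiff: "a - b \<in> ideal_pow IS k" if "a \<in> ideal_pow IS k" "b \<in> ideal_pow IS k" for a b k
    using ideal_diff[OF PI that] .
  have Padd: "a + b \<in> ideal_pow IS k" if "a \<in> ideal_pow IS k" "b \<in> ideal_pow IS k" for a b k
    using ideal_add[OF PI that] .
  have Pml: "c * a \<in> ideal_pow IS k" if "a \<in> ideal_pow IS k" for a c k
    using ideal_mult_left[OF PI that] .
  have iSIa: "\<iota>S a \<in> IS" if "a \<in> IA" for a using iSI that by blast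
  have uniq: "\<mu>1 = \<mu>2"
    if m1: "is_mor IR \<psi>R IS \<psi>S \<mu>1 \<and> \<mu>1 \<circ> \<iota>R = \<iota>S \<and> (\<forall>x. \<mu>1 x - \<mu> x \<in> IS)"
    and m2: "is_mor IR \<psi>R IS \<psi>S \<mu>2 \<and> \<mu>2 \<circ> \<iota>R = \<iota>S \<and> (\<forall>x. \<mu>2 x - \<mu> x \<in> IS)"
    for \<mu>1 \<mu>2
  proof -
    have h1: "is_ring_hom \<mu>1" and c1: "\<And>x. \<mu>1 (\<psi>R x) = \<psi>S (\<mu>1 x)" and i1: "\<And>a. \<mu>1 (\<iota>R a) = \<iota>S a"
      and d1: "\<And>x. \<mu>1 x - \<mu> x \<in> IS"
      using m1 unfolding is_mor_def by (auto simp: fun_eq_iff)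
    have h2: "is_ring_hom \<mu>2" and c2: "\<And>x. \<mu>2 (\<psi>R x) = \<psi>S (\<mu>2 x)" and i2: "\<And>a. \<mu>2 (\<iota>R a) = \<iota>S a"
      and d2: "\<And>x. \<mu>2 x - \<mu> x \<in> IS"
      using m2 unfolding is_mor_def by (auto simp: fun_eq_iff)
    have FG: "\<forall>a\<in>IA. \<mu>1 (\<iota>R a) = \<mu>2 (\<iota>R a) \<and> \<mu>2 (\<iota>R a) \<in> IS" using i1 i2 iSIa by simp
    have D: "\<forall>x. \<mu>1 x - \<mu>2 x \<in> ideal_pow IS k" if "k \<ge> 1" for k
      using that
    proof (induct k rule: nat_induct_at_least)
      case base
      have "(\<mu>1 x - \<mu> x) - (\<mu>2 x - \<mu> x) \<in> IS" for x using ideal_diff[OF ISi d1 d2] .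
      then show ?case using I1 by simp
    next
      case (Suc k)
      show ?case
      proof
        fix x
        have "\<mu>1 (\<psi>R x) - \<mu>2 (\<psi>R x) \<in> ideal_pow IS (Suc k)"
          by (rule key_step[OF ISi qS h1 h2 FG IRdef psiR Suc.hyps(1) Suc.hyps(2)])
        then have "\<psi>S (\<mu>1 x - \<mu>2 x) \<in> ideal_pow IS (Suc k)" by (simp only: c1 c2 hom_diff[OF psiSh])
        then have "\<phi> (\<psi>S (\<mu>1 x - \<mu>2 x)) \<in> ideal_pow IS (Suc k)" by (rule phiP)
        then show "\<mu>1 x - \<mu>2 x \<in> ideal_pow IS (Suc k)" by (simp only: phipsi)
      qed
    qed
    have "\<mu>1 x - \<mu>2 x \<in> ideal_pow IS k" for x k
    proof -
      have "\<mu>1 x - \<mu>2 x \<in> ideal_pow IS (Suc k)" using D[of "Suc k"] by simp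
      then show ?thesis by (rule PS)
    qed
    then show ?thesis by (auto intro: complete_eq[OF compl] ext)
  qed
  define M where "M = rec_nat \<mu> (\<lambda>_ f. \<phi> \<circ> f \<circ> \<psi>R)"
  have M0: "M 0 = \<mu>" and MS: "\<And>k. M (Suc k) = \<phi> \<circ> M k \<circ> \<psi>R" by (simp_all add: M_def)
  have Mh: "is_ring_hom (M k)" for k by (induct k) (simp_all only: M0 MS muhom hom_comp phih psiRh)
  have Mi: "M k (\<iota>R a) = \<iota>S a" for k a
  proof (induct k arbitrary: a)
    case 0 then show ?case using muiota M0 by (metis comp_apply)
  next
    case (Suc k)
    have "M (Suc k) (\<iota>R a) = \<phi> (M k (\<psi>R (\<iota>R a)))" by (simp add: MS)
    also have "\<psi>R (\<iota>R a) = \<iota>R (\<psi>A a)" using iRpsi by (metis comp_apply)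
    also have "M k (\<iota>R (\<psi>A a)) = \<iota>S (\<psi>A a)" by (rule Suc)
    also have "\<iota>S (\<psi>A a) = \<psi>S (\<iota>S a)" using iSpsi by (metis comp_apply)
    finally show ?case by (simp add: phipsi)
  qed
  have Md: "\<forall>x. M (Suc k) x - M k x \<in> ideal_pow IS (Suc k)" for k
  proof (induct k)
    case 0
    show ?case
    proof
      fix x
      have e: "\<mu> (\<psi>R x) - \<psi>S (\<mu> x) = \<mu> (\<psi>R x - x^q) - (\<psi>S (\<mu> x) - (\<mu> x)^q)"
        by (simp add: hom_diff[OF muhom] hom_power[OF muhom])
      have "\<mu> (\<psi>R x - x^q) - (\<psi>S (\<mu> x) - (\<mu> x)^q) \<in> IS"
        using ideal_diff[OF ISi] muIR psiR psiS by blast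
      then have "\<mu> (\<psi>R x) - \<psi>S (\<mu> x) \<in> IS" by (simp only: e)
      then have "\<phi> (\<mu> (\<psi>R x) - \<psi>S (\<mu> x)) \<in> IS" using phiI by blast
      moreover have "\<phi> (\<mu> (\<psi>R x) - \<psi>S (\<mu> x)) = M (Suc 0) x - M 0 x"
        by (simp add: hom_diff[OF phih] phipsi MS M0)
      ultimately show "M (Suc 0) x - M 0 x \<in> ideal_pow IS (Suc 0)" using I1 by simp
    qed
  next
    case (Suc k)
    have FG: "\<forall>a\<in>IA. M (Suc k) (\<iota>R a) = M k (\<iota>R a) \<and> M k (\<iota>R a) \<in> IS" using Mi iSIa by simp
    show ?case
    proof
      fix x
      have "M (Suc k) (\<psi>R x) - M k (\<psi>R x) \<in> ideal_pow IS (Suc (Suc k))"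
        by (rule key_step[OF ISi qS Mh Mh FG IRdef psiR _ Suc]) simp
      then have "\<phi> (M (Suc k) (\<psi>R x) - M k (\<psi>R x)) \<in> ideal_pow IS (Suc (Suc k))" by (rule phiP)
      moreover have "\<phi> (M (Suc k) (\<psi>R x) - M k (\<psi>R x)) = M (Suc (Suc k)) x - M (Suc k) x"
        by (simp add: hom_diff[OF phih] MS)
      ultimately show "M (Suc (Suc k)) x - M (Suc k) x \<in> ideal_pow IS (Suc (Suc k))" by (simp only:)
    qed
  qed
  have Lex: "\<exists>y. \<forall>k. y - M k x \<in> ideal_pow IS k" for x
  proof -
    have c: "\<forall>k. M (Suc k) x - M k x \<in> ideal_pow IS k"
    proof
      fix k show "M (Suc k) x - M k x \<in> ideal_pow IS k" by (rule PS) (use Md[of k] in blast)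
    qed
    have "\<forall>x::nat\<Rightarrow>'s. (\<forall>k. x (Suc k) - x k \<in> ideal_pow IS k) \<longrightarrow> (\<exists>y. \<forall>k. y - x k \<in> ideal_pow IS k)"
      using compl unfolding is_complete_def by (elim conjE)
    then have "(\<forall>k. M (Suc k) x - M k x \<in> ideal_pow IS k) \<longrightarrow> (\<exists>y. \<forall>k. y - M k x \<in> ideal_pow IS k)"
      by (rule spec)
    then show ?thesis using c by (rule mp)
  qed
  define L where "L x = (SOME y. \<forall>k. y - M k x \<in> ideal_pow IS k)" for x
  have L: "L x - M k x \<in> ideal_pow IS k" for x k
  proof -
    have "\<forall>k. L x - M k x \<in> ideal_pow IS k" unfolding L_def by (rule someI_ex[OF Lex[of x]])
    then show ?thesis by (rule spec)
  qed
  have Lhom: "is_ring_hom L"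
    unfolding is_ring_hom_def
  proof (intro conjI allI)
    show "L 1 = 1"
    proof (rule complete_eq[OF compl])
      fix k show "L 1 - 1 \<in> ideal_pow IS k" using L[of 1 k] by (simp only: hom_one[OF Mh])
    qed
  next
    fix x y
    show "L (x + y) = L x + L y"
    proof (rule complete_eq[OF compl])
      fix k
      have "(L (x+y) - M k (x+y)) - (L x - M k x) - (L y - M k y) \<in> ideal_pow IS k"
        by (rule Pdiff[OF Pdiff[OF L L] L])
      moreover have "(L (x+y) - M k (x+y)) - (L x - M k x) - (L y - M k y) = L (x + y) - (L x + L y)"
        by (simp add: hom_add[OF Mh] algebra_simps)
      ultimately show "L (x + y) - (L x + L y) \<in> ideal_pow IS k" by (simp only:)
    qed
  next
    fix x y
    show "L (x * y) = L x * L y"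
    proof (rule complete_eq[OF compl])
      fix k
      have "(L (x*y) - M k (x*y)) - (M k x * (L y - M k y) + L y * (L x - M k x)) \<in> ideal_pow IS k"
        by (rule Pdiff[OF L Padd[OF Pml[OF L] Pml[OF L]]])
      moreover have "(L (x*y) - M k (x*y)) - (M k x * (L y - M k y) + L y * (L x - M k x)) = L (x * y) - L x * L y"
        by (simp add: hom_mult[OF Mh] algebra_simps)
      ultimately show "L (x * y) - L x * L y \<in> ideal_pow IS k" by (simp only:)
    qed
  qed
  have Li: "L (\<iota>R a) = \<iota>S a" for a
  proof (rule complete_eq[OF compl])
    fix k show "L (\<iota>R a) - \<iota>S a \<in> ideal_pow IS k" using L[of "\<iota>R a" k] by (simp only: Mi)
  qed
  have Lpsi: "L (\<psi>R x) = \<psi>S (L x)" for x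
  proof (rule complete_eq[OF compl])
    fix k
    have "(L (\<psi>R x) - M k (\<psi>R x)) - \<psi>S (L x - M (Suc k) x) \<in> ideal_pow IS k"
      by (rule Pdiff[OF L PS[OF psiP[OF L]]])
    moreover have "\<psi>S (M (Suc k) x) = M k (\<psi>R x)" by (simp add: MS psiphi)
    moreover have "(L (\<psi>R x) - M k (\<psi>R x)) - \<psi>S (L x - M (Suc k) x) = L (\<psi>R x) - \<psi>S (L x)"
      using calculation(2) by (simp add: hom_diff[OF psiSh])
    ultimately show "L (\<psi>R x) - \<psi>S (L x) \<in> ideal_pow IS k" by (simp only:)
  qed
  have Lmu: "L x - \<mu> x \<in> IS" for x
  proof -
    have "(L x - M (Suc 0) x) + (M (Suc 0) x - M 0 x) \<in> ideal_pow IS (Suc 0)"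
      by (rule Padd[OF L Md[of 0, rule_format]])
    moreover have "(L x - M (Suc 0) x) + (M (Suc 0) x - M 0 x) = L x - \<mu> x" by (simp add: M0)
    ultimately have "L x - \<mu> x \<in> ideal_pow IS (Suc 0)" by (simp only:)
    then show ?thesis using I1 by simp
  qed
  have LIR: "L ` IR \<subseteq> IS"
  proof (rule image_subsetI)
    fix x assume "x \<in> IR"
    then have "\<mu> x \<in> IS" using muIR by blast
    then have "(L x - \<mu> x) + \<mu> x \<in> IS" using ideal_add[OF ISi Lmu] by blast
    then show "L x \<in> IS" by simp
  qed
  have goodL: "is_mor IR \<psi>R IS \<psi>S L \<and> L \<circ> \<iota>R = \<iota>S \<and> (\<forall>x. L x - \<mu> x \<in> IS)"
    unfolding is_mor_def using Lhom LIR Lpsi Li Lmu by (auto simp: fun_eq_iff)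
  show ?thesis
    by (rule ex1I[of _ L]) (use goodL uniq in blast)+
qed

end
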